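(* Assume $0<\alpha\le1$ and $E\in\mathrm{Swath}(\alpha)$. Let $X_E=X_E(\alpha)$ be the optimal solution of $\mathrm{QP}_E(\alpha)$. If $t=\tfrac12\alpha/\|X_E\|_E$, then $E(t)=\frac{1}{1+t}(E+tX_E)$ lies in $\mathrm{Swath}(\alpha)$.
   Context: $\mathbb{S}^n$ is the space of real symmetric $n\times n$ matrices, $\mathbb{S}^n_{++}$ the positive definite cone. Given $C,A_1,\ldots,A_m\in\mathbb{S}^n$ and $b\in\mathbb{R}^m$, let $\mathcal{A}(X)=(\mathrm{tr}(A_1X),\ldots,\mathrm{tr}(A_mX))$. Standing assumptions: the semidefinite program $\min \mathrm{tr}(CX)$ s.t. $\mathcal{A}(X)=b$, $X\succeq0$ and its dual $\max b^Ty$ s.t. $\sum_iy_iA_i+S=C$, $S\succeq0$ are both strictly feasible; $b\ne0$; $C$ is not a linear combination of the $A_i$; the $A_i$ are linearly independent. For $E\in\mathbb{S}^n_{++}$: $\|X\|_E=\mathrm{tr}((E^{-1}X)^2)^{1/2}$ and $K_E(\alpha)=\{X:\mathrm{tr}(E^{-1}X)\ge\alpha\|X\|_E\}$. $\mathrm{QP}_E(\alpha)$ is $\min\mathrm{tr}(CX)$ s.t. $\mathcal{A}(X)=b$, $X\in K_E(\alpha)$. $\mathrm{Swath}(\alpha)=\{E\in\mathbb{S}^n_{++}:\mathcal{A}(E)=b\text{ and }\mathrm{QP}_E(\alpha)\text{ has an optimal solution}\}$. *)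

theory Defs
  imports "HOL-Analysis.Analysis"
begin

definition sym_mat :: "real^'n^'n \<Rightarrow> bool" where
  "sym_mat X \<longleftrightarrow> transpose X = X"

definition pos_def :: "real^'n^'n \<Rightarrow> bool" where
  "pos_def E \<longleftrightarrow> sym_mat E \<and> (\<forall>x. x \<noteq> 0 \<longrightarrow> x \<bullet> (E *v x) > 0)"

definition Amap :: "('m \<Rightarrow> real^'n^'n) \<Rightarrow> real^'n^'n \<Rightarrow> real^'m" where
  "Amap A X = (\<chi> i. trace (A i ** X))"

definition normE :: "real^'n^'n \<Rightarrow> real^'n^'n \<Rightarrow> real" where
  "normE E X = sqrt (trace ((matrix_inv E ** X) ** (matrix_inv E ** X)))"

definition coneK :: "real^'n^'n \<Rightarrow> real \<Rightarrow> (real^'n^'n) set" where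
  "coneK E \<alpha> = {X. sym_mat X \<and> trace (matrix_inv E ** X) \<ge> \<alpha> * normE E X}"

definition QP_feasible :: "('m \<Rightarrow> real^'n^'n) \<Rightarrow> real^'m \<Rightarrow> real^'n^'n \<Rightarrow> real \<Rightarrow> real^'n^'n \<Rightarrow> bool" where
  "QP_feasible A b E \<alpha> X \<longleftrightarrow> Amap A X = b \<and> X \<in> coneK E \<alpha>"

definition QP_optimal :: "real^'n^'n \<Rightarrow> ('m \<Rightarrow> real^'n^'n) \<Rightarrow> real^'m \<Rightarrow> real^'n^'n \<Rightarrow> real \<Rightarrow> real^'n^'n \<Rightarrow> bool" where
  "QP_optimal C A b E \<alpha> X \<longleftrightarrow> QP_feasible A b E \<alpha> X \<and>
     (\<forall>Y. QP_feasible A b E \<alpha> Y \<longrightarrow> trace (C ** X) \<le> trace (C ** Y))"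

definition Swath :: "real^'n^'n \<Rightarrow> ('m \<Rightarrow> real^'n^'n) \<Rightarrow> real^'m \<Rightarrow> real \<Rightarrow> (real^'n^'n) set" where
  "Swath C A b \<alpha> = {E. pos_def E \<and> Amap A E = b \<and> (\<exists>X. QP_optimal C A b E \<alpha> X)}"

end

theory Submission
  imports Defs
begin

lemma sym_dot: fixes S :: "real^'n^'n" assumes "transpose S = S"
  shows "x \<bullet> (S *v y) = y \<bullet> (S *v x)"
  by (metis assms dot_lmul_matrix inner_commute transpose_matrix_vector)

lemma eig_basis_sub:
  fixes S :: "real^'n^'n"
  assumes symS: "transpose S = S"
  shows "subspace V \<Longrightarrow> (\<forall>x\<in>V. S *v x \<in> V) \<Longrightarrow>
    \<exists>B. B \<subseteq> V \<and> pairwise orthogonal B \<and> (\<forall>b\<in>B. norm b = 1 \<and> S *v b = (b \<bullet> (S *v b)) *\<^sub>R b) \<and> V \<subseteq> span B"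
proof (induction "dim V" arbitrary: V rule: less_induct)
  case less
  show ?case
  proof (cases "V \<subseteq> {0}")
    case True
    then show ?thesis by (intro exI[of _ "{}"]) auto
  next
    case False
    then obtain x0 where x0: "x0 \<in> V" "x0 \<noteq> 0" by auto
    let ?K = "V \<inter> sphere 0 1"
    have cK: "compact ?K"
      using closed_subspace[OF less.prems(1)] compact_sphere by (simp add: closed_Int_compact)
    have neK: "?K \<noteq> {}"
    proof -
      have "(1/norm x0) *\<^sub>R x0 \<in> ?K" using x0 less.prems(1)
        by (simp add: subspace_scale)
      then show ?thesis by blast
    qed
    have cf: "continuous_on ?K (\<lambda>x. x \<bullet> (S *v x))"
      by (intro continuous_intros)
    obtain v where v: "v \<in> ?K" and vmax: "\<And>y. y \<in> ?K \<Longrightarrow> y \<bullet> (S *v y) \<le> v \<bullet> (S *v v)"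
      using continuous_attains_sup[OF cK neK cf] by blast
    define l where "l = v \<bullet> (S *v v)"
    have vV: "v \<in> V" and nv: "norm v = 1" using v by auto
    have quad: "y \<bullet> (S *v y) \<le> l * (y \<bullet> y)" if "y \<in> V" for y
    proof (cases "y = 0")
      case True then show ?thesis by simp
    next
      case False
      let ?u = "(1/norm y) *\<^sub>R y"
      have "?u \<in> ?K" using that False less.prems(1) by (simp add: subspace_scale)
      then have "?u \<bullet> (S *v ?u) \<le> l" using vmax l_def by blast
      moreover have "?u \<bullet> (S *v ?u) = (y \<bullet> (S *v y)) / (norm y)^2"
      proof -
        have "S *v ?u = (1/norm y) *\<^sub>R (S *v y)" by (rule matrix_vector_mult_scaleR)
        then show ?thesis by (simp add: power2_eq_square)
      qed
      ultimately have "(y \<bullet> (S *v y)) / (norm y)^2 \<le> l" by linarith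
      then have "y \<bullet> (S *v y) \<le> l * (norm y)^2"
        using False by (simp add: divide_le_eq mult.commute)
      then show ?thesis by (simp add: power2_norm_eq_inner)
    qed
    have orth: "w \<bullet> (S *v v) = 0" if "w \<in> V" "w \<bullet> v = 0" for w
    proof -
      define c where "c = w \<bullet> (S *v v)"
      define k where "k = w \<bullet> (S *v w) - l * (w \<bullet> w)"
      have *: "2 * e * c + e^2 * k \<le> 0" for e
      proof -
        have "v + e *\<^sub>R w \<in> V" using that vV less.prems(1)
          by (simp add: subspace_add subspace_scale)
        from quad[OF this] have h1: "(v + e *\<^sub>R w) \<bullet> (S *v (v + e *\<^sub>R w)) \<le> l * ((v + e *\<^sub>R w) \<bullet> (v + e *\<^sub>R w))" .
        have h2: "(v + e *\<^sub>R w) \<bullet> (S *v (v + e *\<^sub>R w)) = l + 2 * e * c + e^2 * (w \<bullet> (S *v w))"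
          using sym_dot[OF symS, of v w]
          by (simp add: matrix_vector_right_distrib matrix_vector_mult_scaleR inner_add_left inner_add_right l_def c_def power2_eq_square algebra_simps)
        have h3: "(v + e *\<^sub>R w) \<bullet> (v + e *\<^sub>R w) = 1 + e^2 * (w \<bullet> w)"
          using nv that(2) by (simp add: inner_add_left inner_add_right power2_eq_square inner_commute norm_eq_1 algebra_simps)
        from h1 have "l + 2 * e * c + e^2 * (w \<bullet> (S *v w)) \<le> l * (1 + e^2 * (w \<bullet> w))"
          unfolding h2 h3 .
        then show ?thesis by (simp add: k_def algebra_simps)
      qed
      define m where "m = \<bar>k\<bar> + 1"
      have m0: "m > 0" "\<bar>k\<bar> < m" by (auto simp: m_def)
      define e where "e = c / (2 * m)"
      have "2 * e * c + e^2 * k \<le> 0" by (rule *)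
      moreover have "2 * e * c + e^2 * k = c^2 / m * (1 + k / (4 * m))"
        using m0 by (simp add: e_def field_simps power2_eq_square)
      moreover have pos: "1 + k / (4 * m) > 0"
        using m0 by (auto simp: field_simps abs_less_iff)
      ultimately have le: "c^2 / m * (1 + k / (4 * m)) \<le> 0" by simp
      have "c^2 / m \<le> 0"
      proof (rule ccontr)
        assume "\<not> c^2 / m \<le> 0"
        then have "c^2 / m * (1 + k / (4 * m)) > 0" using pos by (intro mult_pos_pos) auto
        then show False using le by simp
      qed
      then have "c^2 \<le> 0" using m0 by (simp add: divide_le_0_iff)
      then show ?thesis unfolding c_def by simp
    qed
    have eig: "S *v v = l *\<^sub>R v"
    proof -
      define u where "u = S *v v - l *\<^sub>R v"
      have uV: "u \<in> V" using less.prems vV by (simp add: u_def subspace_diff subspace_scale)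
      have uv: "u \<bullet> v = 0" using nv
        by (simp add: u_def inner_diff_left inner_diff_right l_def norm_eq_1 inner_commute[of "S *v v" v])
      have "u \<bullet> u = u \<bullet> (S *v v) - l * (u \<bullet> v)"
        by (simp add: u_def inner_diff_right)
      also have "\<dots> = 0" using orth[OF uV uv] uv by simp
      finally show ?thesis unfolding u_def by simp
    qed
    define V' where "V' = {x \<in> V. x \<bullet> v = 0}"
    have subV': "subspace V'" using less.prems(1)
      unfolding V'_def subspace_def by (auto simp: inner_add_left)
    have invV': "\<forall>x\<in>V'. S *v x \<in> V'"
    proof
      fix x assume "x \<in> V'"
      then have "x \<in> V" "x \<bullet> v = 0" by (auto simp: V'_def)
      then show "S *v x \<in> V'"
        using less.prems(2) sym_dot[OF symS, of v x] eig
        by (auto simp: V'_def inner_commute)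
    qed
    have "V' \<subset> V"
    proof -
      have "v \<notin> V'" using nv by (auto simp: V'_def norm_eq_1)
      moreover have "V' \<subseteq> V" by (auto simp: V'_def)
      ultimately show ?thesis using vV by blast
    qed
    then have "dim V' < dim V"
      using dim_psubset[of V' V] subV' less.prems(1) by (metis span_eq_iff)
    from less.hyps[OF this subV' invV'] obtain B' where
      B': "B' \<subseteq> V'" "pairwise orthogonal B'" "\<forall>b\<in>B'. norm b = 1 \<and> S *v b = (b \<bullet> (S *v b)) *\<^sub>R b" "V' \<subseteq> span B'"
      by blast
    show ?thesis
    proof (intro exI[of _ "insert v B'"] conjI)
      show "insert v B' \<subseteq> V" using B'(1) vV by (auto simp: V'_def)
      show "pairwise orthogonal (insert v B')"
        using B'(1,2) by (auto simp: pairwise_insert V'_def orthogonal_def inner_commute)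
      show "\<forall>b\<in>insert v B'. norm b = 1 \<and> S *v b = (b \<bullet> (S *v b)) *\<^sub>R b"
        using B'(3) nv eig l_def by auto
      show "V \<subseteq> span (insert v B')"
      proof
        fix x assume xV: "x \<in> V"
        have "x - (x \<bullet> v) *\<^sub>R v \<in> V'" using xV vV nv less.prems(1)
          by (simp add: V'_def subspace_diff subspace_scale inner_diff_left norm_eq_1)
        then have "x - (x \<bullet> v) *\<^sub>R v \<in> span (insert v B')"
          using B'(4) span_mono[of B' "insert v B'"] by blast
        moreover have "(x \<bullet> v) *\<^sub>R v \<in> span (insert v B')"
          by (simp add: span_base span_scale)
        ultimately show "x \<in> span (insert v B')"
          by (metis diff_add_cancel span_add)
      qed
    qed
  qed
qed

definition dg :: "real^'n \<Rightarrow> real^'n^'n" where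
  "dg d = (\<chi> i j. if i = j then d $ i else 0)"

lemma spectral:
  fixes S :: "real^'n^'n" assumes symS: "transpose S = S"
  obtains U :: "real^'n^'n" and d :: "real^'n" where
    "transpose U ** U = mat 1" "U ** transpose U = mat 1" "S ** U = U ** dg d"
proof -
  obtain B where B: "pairwise orthogonal B" "\<forall>b\<in>B. norm b = 1 \<and> S *v b = (b \<bullet> (S *v b)) *\<^sub>R b"
     "UNIV \<subseteq> span B"
    using eig_basis_sub[OF symS, of UNIV] by auto
  have "0 \<notin> B" using B(2) by auto
  then have indB: "independent B" using pairwise_orthogonal_independent[OF B(1)] by simp
  then have finB: "finite B" using independent_imp_finite by blast
  have "span B = UNIV" using B(3) by auto
  then have "card B = dim (UNIV :: (real^'n) set)" using dim_span_eq_card_independent[OF indB] by simp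
  also have "\<dots> = CARD('n)" by simp
  finally have "card (UNIV::'n set) = card B" by simp
  then obtain f where f: "bij_betw f (UNIV::'n set) B"
    using finite_same_card_bij[of "UNIV::'n set" B] finB by auto
  have fB: "f j \<in> B" for j using f by (auto simp: bij_betw_def)
  have fin: "f i \<bullet> f j = (if i = j then 1 else 0)" for i j
  proof (cases "i = j")
    case True then show ?thesis using B(2) fB[of j] by (simp add: norm_eq_1)
  next
    case False
    then have "f i \<noteq> f j" using f by (auto simp: bij_betw_def inj_on_def)
    then show ?thesis using B(1) fB[of i] fB[of j] False by (auto simp: pairwise_def orthogonal_def)
  qed
  define U where "U = (\<chi> i j. f j $ i)"
  define d where "d = (\<chi> j. f j \<bullet> (S *v f j))"
  have 1: "transpose U ** U = mat 1"
    unfolding U_def by (simp add: vec_eq_iff matrix_matrix_mult_def transpose_def mat_def fin[symmetric] inner_vec_def)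
  then have 2: "U ** transpose U = mat 1" by (simp add: matrix_left_right_inverse)
  have eig: "S *v f j = d $ j *\<^sub>R f j" for j using B(2) fB[of j] by (simp add: d_def)
  have 3: "S ** U = U ** dg d"
  proof -
    have "(S ** U) $ i $ j = (U ** dg d) $ i $ j" for i j
    proof -
      have "(S ** U) $ i $ j = (S *v f j) $ i"
        by (simp add: matrix_matrix_mult_def matrix_vector_mult_def U_def)
      also have "\<dots> = d $ j * f j $ i" using eig[of j] by simp
      also have "\<dots> = (U ** dg d) $ i $ j"
        by (simp add: matrix_matrix_mult_def dg_def U_def if_distrib[of "\<lambda>x. _ * x"] cong: if_cong)
      finally show ?thesis .
    qed
    then show ?thesis by (simp add: vec_eq_iff)
  qed
  show ?thesis using 1 2 3 that by blast
qed

lemma mm_radd: "(A + B) ** C = A ** C + B ** (C::real^'n^'n)"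
  by (vector matrix_matrix_mult_def sum.distrib[symmetric] field_simps)
lemma mm_ldiff: "A ** (B - C) = A ** B - A ** (C::real^'n^'n)"
  by (vector matrix_matrix_mult_def sum_subtractf[symmetric] field_simps)
lemma mm_rdiff: "(A - B) ** C = A ** C - B ** (C::real^'n^'n)"
  by (vector matrix_matrix_mult_def sum_subtractf[symmetric] field_simps)
lemma trace_scaleR: "trace (c *\<^sub>R (A::real^'n^'n)) = c * trace A"
  by (simp add: trace_def sum_distrib_left)
lemma transpose_add: "transpose (A + B) = transpose A + transpose (B::real^'n^'n)"
  by (simp add: transpose_def vec_eq_iff)
lemma transpose_diff: "transpose (A - B) = transpose A - transpose (B::real^'n^'n)"
  by (simp add: transpose_def vec_eq_iff)
lemma tr_inner: "trace (A ** B) = transpose A \<bullet> (B::real^'n^'n)"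
  by (simp add: trace_def matrix_matrix_mult_def inner_vec_def transpose_def)
     (subst sum.swap, simp)
lemma tr_sym_inner: "transpose A = A \<Longrightarrow> trace (A ** B) = A \<bullet> (B::real^'n^'n)"
  by (metis tr_inner)

lemma inv_props:
  fixes A :: "real^'n^'n"
  assumes "invertible A"
  shows "A ** matrix_inv A = mat 1" "matrix_inv A ** A = mat 1"
proof -
  have "\<exists>A'. A ** A' = mat 1 \<and> A' ** A = mat 1" using assms by (simp add: invertible_def)
  then have "A ** matrix_inv A = mat 1 \<and> matrix_inv A ** A = mat 1"
    unfolding matrix_inv_def by (rule someI_ex)
  then show "A ** matrix_inv A = mat 1" "matrix_inv A ** A = mat 1" by auto
qed

lemma inv_unique:
  fixes A B :: "real^'n^'n"
  assumes "A ** B = mat 1"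
  shows "matrix_inv A = B"
proof -
  have inv: "invertible A" using assms invertible_right_inverse by blast
  have "matrix_inv A = matrix_inv A ** (A ** B)" using assms by simp
  also have "\<dots> = B" by (simp add: matrix_mul_assoc inv_props(2)[OF inv])
  finally show ?thesis .
qed

lemma pd_inj: "pos_def E \<Longrightarrow> E *v x = 0 \<Longrightarrow> x = 0"
  unfolding pos_def_def by force

lemma pd_invertible: "pos_def (E::real^'n^'n) \<Longrightarrow> invertible E"
  using pd_inj[of E] matrix_left_invertible_ker[of E] invertible_left_inverse by blast

lemma dg_mult: "dg a ** dg b = dg (\<chi> i. a $ i * b $ i)"
  by (simp add: dg_def matrix_matrix_mult_def vec_eq_iff if_distrib[of "\<lambda>x. x * _"] if_distrib[of "\<lambda>x. _ * x"] cong: if_cong)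
lemma dg_transpose: "transpose (dg a) = dg a"
  by (simp add: dg_def transpose_def vec_eq_iff)
lemma dg_one: "(\<And>i. a $ i = 1) \<Longrightarrow> dg a = mat 1"
  by (simp add: dg_def mat_def vec_eq_iff)

lemma sqrt_pd:
  fixes M :: "real^'n^'n"
  assumes pd: "pos_def M"
  obtains R Ri where "transpose R = R" "transpose Ri = Ri" "R ** R = M" "R ** Ri = mat 1" "Ri ** R = mat 1"
proof -
  have symM: "transpose M = M" using pd by (simp add: pos_def_def sym_mat_def)
  obtain U :: "real^'n^'n" and d where U: "transpose U ** U = mat 1" "U ** transpose U = mat 1" "M ** U = U ** dg d"
    using spectral[OF symM] by metis
  have Meq: "M = U ** dg d ** transpose U"
  proof -
    have "M = M ** (U ** transpose U)" using U(2) by simp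
    also have "\<dots> = U ** dg d ** transpose U" by (simp add: matrix_mul_assoc U(3))
    finally show ?thesis .
  qed
  have dpos: "d $ j > 0" for j
  proof -
    define u where "u = (\<chi> k. U $ k $ j)"
    have "(transpose U ** U) $ j $ j = 1" using U(1) by (simp add: mat_def)
    then have "u \<bullet> u = 1"
      by (simp add: u_def inner_vec_def matrix_matrix_mult_def transpose_def power2_eq_square)
    then have u0: "u \<noteq> 0" by auto
    have MU: "(M ** U) $ k $ j = (M *v u) $ k" for k
      by (simp add: matrix_matrix_mult_def matrix_vector_mult_def u_def)
    have "(transpose U ** (M ** U)) $ j $ j = u \<bullet> (M *v u)"
      by (simp add: matrix_matrix_mult_def transpose_def inner_vec_def u_def matrix_vector_mult_def)
    also have "transpose U ** (M ** U) = dg d"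
      by (simp add: U(3) matrix_mul_assoc U(1))
    finally have "d $ j = u \<bullet> (M *v u)" by (simp add: dg_def)
    then show ?thesis using pd u0 by (simp add: pos_def_def)
  qed
  define sd where "sd = (\<chi> j. sqrt (d $ j))"
  define isd where "isd = (\<chi> j. 1 / sqrt (d $ j))"
  define R where "R = U ** dg sd ** transpose U"
  define Ri where "Ri = U ** dg isd ** transpose U"
  have mult: "(U ** dg a ** transpose U) ** (U ** dg b ** transpose U) = U ** dg (\<chi> i. a $ i * b $ i) ** transpose U" for a b
  proof -
    have "(U ** dg a ** transpose U) ** (U ** dg b ** transpose U) = U ** dg a ** (transpose U ** U) ** dg b ** transpose U"
      by (simp add: matrix_mul_assoc)
    also have "\<dots> = U ** (dg a ** dg b) ** transpose U" by (simp add: U(1) matrix_mul_assoc)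
    finally show ?thesis by (simp add: dg_mult)
  qed
  have tr: "transpose (U ** dg a ** transpose U) = U ** dg a ** transpose U" for a
    by (simp add: matrix_transpose_mul dg_transpose matrix_mul_assoc)
  have "R ** R = M" unfolding R_def mult Meq using dpos
  proof -
    have "(\<chi> i. \<bar>d $ i\<bar>) = d" using dpos by (simp add: vec_eq_iff less_imp_le)
    then show "U ** dg (\<chi> i. sd $ i * sd $ i) ** transpose U = U ** dg d ** transpose U"
      by (simp add: sd_def)
  qed
  moreover have "R ** Ri = mat 1" unfolding R_def Ri_def mult
  proof -
    have "dg (\<chi> i. sd $ i * isd $ i) = mat 1" using dpos
      by (intro dg_one) (simp add: sd_def isd_def less_imp_neq[symmetric])
    then show "U ** dg (\<chi> i. sd $ i * isd $ i) ** transpose U = mat 1" by (simp add: U(2))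
  qed
  moreover have "Ri ** R = mat 1" unfolding R_def Ri_def mult
  proof -
    have "dg (\<chi> i. isd $ i * sd $ i) = mat 1" using dpos
      by (intro dg_one) (simp add: sd_def isd_def less_imp_neq[symmetric])
    then show "U ** dg (\<chi> i. isd $ i * sd $ i) ** transpose U = mat 1" by (simp add: U(2))
  qed
  ultimately show ?thesis using that tr unfolding R_def Ri_def by blast
qed

lemma norm_sq_mat: "(norm (A::real^'n^'m))^2 = (\<Sum>i\<in>UNIV. \<Sum>j\<in>UNIV. (A$i$j)^2)"
  unfolding power2_norm_eq_inner by (simp add: inner_vec_def power2_eq_square)

lemma norm_mv: "norm ((A::real^'n^'m) *v x) \<le> norm A * norm x"
proof -
  have "(norm (A *v x))^2 = (\<Sum>i\<in>UNIV. (A $ i \<bullet> x)^2)"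
    unfolding power2_norm_eq_inner by (simp add: inner_vec_def matrix_vector_mul_component power2_eq_square)
  also have "\<dots> \<le> (\<Sum>i\<in>UNIV. (norm (A $ i))^2 * (norm x)^2)"
  proof (rule sum_mono)
    fix i
    have "\<bar>A $ i \<bullet> x\<bar> \<le> norm (A $ i) * norm x" by (rule Cauchy_Schwarz_ineq2)
    then show "(A $ i \<bullet> x)^2 \<le> (norm (A $ i))^2 * (norm x)^2"
      by (metis abs_ge_zero power2_abs power_mono power_mult_distrib)
  qed
  also have "\<dots> = (norm A * norm x)^2"
    unfolding sum_distrib_right[symmetric] power_mult_distrib
    unfolding power2_norm_eq_inner by (simp add: inner_vec_def)
  finally have that_fact: "(norm (A *v x))^2 \<le> (norm A * norm x)^2" .
  then show ?thesis by (intro power2_le_imp_le[OF that_fact] mult_nonneg_nonneg norm_ge_zero)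
qed

lemma norm_transpose: "norm (transpose (A::real^'n^'n)) = norm A"
proof -
  have "(norm (transpose A))^2 = (norm A)^2"
    unfolding norm_sq_mat by (simp add: transpose_def) (rule sum.swap)
  then show ?thesis by (simp add: power2_eq_iff_nonneg)
qed

lemma norm_mm: "norm ((A::real^'n^'n) ** (B::real^'n^'n)) \<le> norm A * norm B"
proof -
  have row: "(A ** B) $ i = transpose B *v (A $ i)" for i
    by (simp add: vec_eq_iff matrix_matrix_mult_def matrix_vector_mult_def transpose_def mult.commute)
  have "(norm (A ** B))^2 = (\<Sum>i\<in>UNIV. (norm ((A ** B) $ i))^2)"
    unfolding power2_norm_eq_inner by (simp add: inner_vec_def)
  also have "\<dots> \<le> (\<Sum>i\<in>UNIV. (norm B)^2 * (norm (A $ i))^2)"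
  proof (rule sum_mono)
    fix i
    have "norm ((A ** B) $ i) = norm (transpose B *v A $ i)" by (simp only: row)
    also have "\<dots> \<le> norm (transpose B) * norm (A $ i)" by (rule norm_mv)
    also have "\<dots> = norm B * norm (A $ i)" by (simp only: norm_transpose)
    finally have "norm ((A ** B) $ i) \<le> norm B * norm (A $ i)" .
    then show "(norm ((A ** B) $ i))^2 \<le> (norm B)^2 * (norm (A $ i))^2"
      by (metis norm_ge_zero power_mono power_mult_distrib)
  qed
  also have "\<dots> = (norm A * norm B)^2"
    unfolding sum_distrib_left[symmetric] power_mult_distrib
    unfolding power2_norm_eq_inner by (simp add: inner_vec_def mult.commute)
  finally have that_fact: "(norm (A ** B))^2 \<le> (norm A * norm B)^2" .
  then show ?thesis by (intro power2_le_imp_le[OF that_fact] mult_nonneg_nonneg norm_ge_zero)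
qed

lemma lagrange:
  fixes a b :: "'k \<Rightarrow> real" assumes "finite K"
  shows "(\<Sum>k\<in>K. (a k)^2) * (\<Sum>k\<in>K. (b k)^2) - (\<Sum>k\<in>K. a k * b k)^2
     = (\<Sum>k\<in>K. \<Sum>l\<in>K. (a k * b l - a l * b k)^2) / 2"
proof -
  have 1: "(\<Sum>k\<in>K. \<Sum>l\<in>K. (a k)^2 * (b l)^2) = (\<Sum>k\<in>K. (a k)^2) * (\<Sum>k\<in>K. (b k)^2)"
    by (simp add: sum_product)
  have 2: "(\<Sum>k\<in>K. \<Sum>l\<in>K. (a l)^2 * (b k)^2) = (\<Sum>k\<in>K. (a k)^2) * (\<Sum>k\<in>K. (b k)^2)"
    by (simp add: sum_product mult.commute) (rule sum.swap)
  have 3: "(\<Sum>k\<in>K. \<Sum>l\<in>K. (a k * b k) * (a l * b l)) = (\<Sum>k\<in>K. a k * b k)^2"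
    by (simp add: sum_product power2_eq_square)
  have "(\<Sum>k\<in>K. \<Sum>l\<in>K. (a k * b l - a l * b k)^2)
      = (\<Sum>k\<in>K. \<Sum>l\<in>K. (a k)^2 * (b l)^2 + (a l)^2 * (b k)^2 - 2 * ((a k * b k) * (a l * b l)))"
    by (intro sum.cong refl) (simp add: power2_eq_square algebra_simps)
  also have "\<dots> = (\<Sum>k\<in>K. \<Sum>l\<in>K. (a k)^2 * (b l)^2) + (\<Sum>k\<in>K. \<Sum>l\<in>K. (a l)^2 * (b k)^2)
      - 2 * (\<Sum>k\<in>K. \<Sum>l\<in>K. (a k * b k) * (a l * b l))"
    by (simp add: sum.distrib sum_subtractf sum_distrib_left)
  finally have eq: "(\<Sum>k\<in>K. \<Sum>l\<in>K. (a k * b l - a l * b k)^2)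
      = (\<Sum>k\<in>K. \<Sum>l\<in>K. (a k)^2 * (b l)^2) + (\<Sum>k\<in>K. \<Sum>l\<in>K. (a l)^2 * (b k)^2)
      - 2 * (\<Sum>k\<in>K. \<Sum>l\<in>K. (a k * b k) * (a l * b l))" .
  show ?thesis by (simp only: eq 1 2 3) (simp add: field_simps)
qed

lemma norm_sq_mm: "(norm (A ** B))^2 = (\<Sum>i\<in>UNIV. \<Sum>j\<in>UNIV. (\<Sum>k\<in>UNIV. A$i$k * B$k$j)^2)"
  for A B :: "real^'n^'n"
  unfolding norm_sq_mat by (simp add: matrix_matrix_mult_def)

lemma lagrange_mat:
  fixes Q :: "real^'n^'n"
  assumes symQ: "transpose Q = Q" and eq: "norm (Q ** Q) = (norm Q)^2"
  shows "Q ** Q = trace Q *\<^sub>R Q"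
proof -
  define F where "F i j = (\<Sum>k\<in>UNIV. \<Sum>l\<in>UNIV. (Q$i$k * Q$l$j - Q$i$l * Q$k$j)^2) / 2" for i j
  have Fnn: "F i j \<ge> 0" for i j unfolding F_def by (intro divide_nonneg_pos sum_nonneg) auto
  have Fi: "F i j = (\<Sum>k\<in>UNIV. (Q$i$k)^2) * (\<Sum>k\<in>UNIV. (Q$k$j)^2) - (\<Sum>k\<in>UNIV. Q$i$k * Q$k$j)^2" for i j
    unfolding F_def using lagrange[of UNIV "\<lambda>k. Q$i$k" "\<lambda>k. Q$k$j"] by simp
  have "(\<Sum>i\<in>UNIV. \<Sum>j\<in>UNIV. F i j) = (norm Q)^2 * (norm Q)^2 - (norm (Q ** Q))^2"
  proof -
    have a: "(\<Sum>i\<in>UNIV. \<Sum>j\<in>UNIV. (\<Sum>k\<in>UNIV. (Q$i$k)^2) * (\<Sum>k\<in>UNIV. (Q$k$j)^2)) = (norm Q)^2 * (norm Q)^2"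
    proof -
      have s: "(norm Q)^2 = (\<Sum>j\<in>UNIV. \<Sum>k\<in>UNIV. (Q$k$j)^2)" unfolding norm_sq_mat by (rule sum.swap)
      have "(\<Sum>i\<in>UNIV. \<Sum>j\<in>UNIV. (\<Sum>k\<in>UNIV. (Q$i$k)^2) * (\<Sum>k\<in>UNIV. (Q$k$j)^2))
         = (\<Sum>i\<in>UNIV. \<Sum>k\<in>UNIV. (Q$i$k)^2) * (\<Sum>j\<in>UNIV. \<Sum>k\<in>UNIV. (Q$k$j)^2)"
        by (rule sum_product[symmetric])
      also have "\<dots> = (norm Q)^2 * (norm Q)^2" by (simp only: s[symmetric] norm_sq_mat[of Q, symmetric])
      finally show ?thesis .
    qed
    show ?thesis unfolding Fi norm_sq_mm by (simp add: sum_subtractf a)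
  qed
  also have "\<dots> = 0" using eq by (simp add: power2_eq_square)
  finally have "(\<Sum>i\<in>UNIV. \<Sum>j\<in>UNIV. F i j) = 0" .
  then have F0: "F i j = 0" for i j
    using Fnn by (simp add: sum_nonneg_eq_0_iff sum_nonneg)
  have term0: "Q$i$k * Q$l$j - Q$i$l * Q$k$j = 0" for i j k l
  proof -
    have "(\<Sum>k\<in>UNIV. \<Sum>l\<in>UNIV. (Q$i$k * Q$l$j - Q$i$l * Q$k$j)^2) = 0"
      using F0[of i j] by (simp add: F_def)
    then have "(\<Sum>l\<in>UNIV. (Q$i$k * Q$l$j - Q$i$l * Q$k$j)^2) = 0"
      by (simp add: sum_nonneg_eq_0_iff sum_nonneg)
    then show ?thesis by (simp add: sum_nonneg_eq_0_iff)
  qed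
  have sq: "Q$a$b = Q$b$a" for a b
  proof -
    have "transpose Q $ b $ a = Q $ a $ b" by (simp add: transpose_def)
    then show ?thesis using symQ by simp
  qed
  have "(Q ** Q)$i$j = (trace Q *\<^sub>R Q)$i$j" for i j
  proof -
    have "(Q ** Q)$i$j = (\<Sum>k\<in>UNIV. Q$i$k * Q$k$j)" by (simp add: matrix_matrix_mult_def)
    also have "\<dots> = (\<Sum>k\<in>UNIV. Q$i$j * Q$k$k)"
    proof (rule sum.cong[OF refl])
      fix k
      have "Q$i$k * Q$j$k - Q$i$j * Q$k$k = 0" using term0[of i k j k] .
      then show "Q$i$k * Q$k$j = Q$i$j * Q$k$k" using sq[of j k] by simp
    qed
    also have "\<dots> = (trace Q *\<^sub>R Q)$i$j" by (simp add: trace_def sum_distrib_left mult.commute)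
    finally show ?thesis .
  qed
  then show ?thesis by (simp add: vec_eq_iff)
qed

lemma quad_lower: "transpose (Q::real^'n^'n) = Q \<Longrightarrow> x \<bullet> (Q *v x) \<ge> - (norm Q * (norm x)^2)"
proof -
  have "\<bar>x \<bullet> (Q *v x)\<bar> \<le> norm x * norm (Q *v x)" by (rule Cauchy_Schwarz_ineq2)
  also have "\<dots> \<le> norm x * (norm Q * norm x)" by (intro mult_left_mono norm_mv) auto
  finally show ?thesis by (simp add: power2_eq_square algebra_simps)
qed

lemma pd_I_plus:
  fixes Q :: "real^'n^'n"
  assumes "transpose Q = Q" "norm Q < 1"
  shows "pos_def (mat 1 + Q)"
  unfolding pos_def_def sym_mat_def
proof (intro conjI allI impI)
  show "transpose (mat 1 + Q) = mat 1 + Q" using assms by (simp add: transpose_add)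
  fix x :: "real^'n" assume "x \<noteq> 0"
  then have nx: "(norm x)^2 > 0" by simp
  have "x \<bullet> ((mat 1 + Q) *v x) = x \<bullet> x + x \<bullet> (Q *v x)"
    by (simp add: matrix_vector_mult_add_rdistrib inner_add_right)
  also have "\<dots> \<ge> (norm x)^2 - norm Q * (norm x)^2"
    using quad_lower[OF assms(1), of x] by (simp add: power2_norm_eq_inner)
  finally have "x \<bullet> ((mat 1 + Q) *v x) \<ge> (1 - norm Q) * (norm x)^2" by (simp add: algebra_simps)
  moreover have "(1 - norm Q) * (norm x)^2 > 0" using assms(2) nx by simp
  ultimately show "0 < x \<bullet> ((mat 1 + Q) *v x)" by linarith
qed

lemma pd_inv:
  fixes T :: "real^'n^'n"
  assumes pd: "pos_def T"
  shows "pos_def (matrix_inv T)" "T ** matrix_inv T = mat 1" "matrix_inv T ** T = mat 1"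
proof -
  have inv: "invertible T" by (rule pd_invertible[OF pd])
  note I = inv_props[OF inv]
  show "T ** matrix_inv T = mat 1" "matrix_inv T ** T = mat 1" by (rule I(1), rule I(2))
  let ?Ti = "matrix_inv T"
  have symT: "transpose T = T" using pd by (simp add: pos_def_def sym_mat_def)
  have "transpose ?Ti ** T = transpose (T ** ?Ti)" by (simp add: matrix_transpose_mul symT)
  then have tl: "transpose ?Ti ** T = mat 1" by (simp add: I(1))
  have "transpose ?Ti = transpose ?Ti ** (T ** ?Ti)" by (simp add: I(1))
  also have "\<dots> = (transpose ?Ti ** T) ** ?Ti" by (simp add: matrix_mul_assoc)
  finally have symTi: "transpose ?Ti = ?Ti" by (simp add: tl)
  show "pos_def ?Ti" unfolding pos_def_def sym_mat_def
  proof (intro conjI allI impI symTi)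
    fix x :: "real^'n" assume x0: "x \<noteq> 0"
    define y where "y = ?Ti *v x"
    have Ty: "T *v y = x" by (simp add: y_def matrix_vector_mul_assoc I(1))
    then have "y \<noteq> 0" using x0 by auto
    then have "0 < y \<bullet> (T *v y)" using pd by (simp add: pos_def_def)
    also have "y \<bullet> (T *v y) = y \<bullet> x" by (simp only: Ty)
    also have "\<dots> = x \<bullet> (?Ti *v x)" by (simp add: y_def inner_commute)
    finally show "0 < x \<bullet> (?Ti *v x)" .
  qed
qed

lemma times2_scaleR: "(Q::real^'n^'n) * 2 = 2 *\<^sub>R Q"
  by (simp add: vec_eq_iff)

lemma KL:
  fixes Q D :: "real^'n^'n" and \<alpha> :: real
  assumes symQ: "transpose Q = Q" and nQ: "norm Q = \<alpha>/2" and trQ: "trace Q \<ge> \<alpha> * norm Q"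
    and al: "0 < \<alpha>" "\<alpha> \<le> 1"
    and symD: "transpose D = D" and D0: "D \<noteq> 0"
    and cone: "trace (matrix_inv (mat 1 + Q) ** D) \<ge> \<alpha> * sqrt (trace (matrix_inv (mat 1 + Q) ** D ** (matrix_inv (mat 1 + Q) ** D)))"
  shows "trace D - 2 * (Q \<bullet> D) > 0 \<or> (\<exists>c>0. D = c *\<^sub>R (Q ** Q))"
proof -
  define T where "T = mat 1 + Q"
  define Ti where "Ti = matrix_inv T"
  have pdT: "pos_def T" unfolding T_def using symQ nQ al by (intro pd_I_plus) auto
  have pdTi: "pos_def Ti" and TTi: "T ** Ti = mat 1" and TiT: "Ti ** T = mat 1"
    using pd_inv[OF pdT] by (auto simp: Ti_def)
  have symTi: "transpose Ti = Ti" using pdTi by (simp add: pos_def_def sym_mat_def)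
  have symT: "transpose T = T" using pdT by (simp add: pos_def_def sym_mat_def)
  obtain S Si :: "real^'n^'n" where S: "transpose S = S" "transpose Si = Si" "S ** S = Ti" "S ** Si = mat 1" "Si ** S = mat 1"
    using sqrt_pd[OF pdTi] by blast
  define hat where "hat U = S ** U ** S" for U
  have hat_sym: "transpose (hat U) = hat U" if "transpose U = U" for U
    using that by (simp add: hat_def matrix_transpose_mul S(1) matrix_mul_assoc)
  have beta: "trace (Ti ** U ** (Ti ** V)) = hat U \<bullet> hat V" if sU: "transpose U = U" for U V
  proof -
    have "Ti ** U ** (Ti ** V) = S ** (hat U ** S ** V)"
      by (simp add: hat_def S(3)[symmetric] matrix_mul_assoc)
    then have "trace (Ti ** U ** (Ti ** V)) = trace (S ** (hat U ** S ** V))" by simp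
    also have "\<dots> = trace (hat U ** S ** V ** S)" by (rule trace_mul_sym)
    also have "hat U ** S ** V ** S = hat U ** hat V" by (simp add: hat_def matrix_mul_assoc)
    finally show ?thesis using tr_sym_inner[OF hat_sym[OF sU]] by simp
  qed
  have hat_inv: "Si ** hat U ** Si = U" for U
  proof -
    have "Si ** hat U ** Si = (Si ** S) ** U ** (S ** Si)" by (simp add: hat_def matrix_mul_assoc)
    then show ?thesis by (simp add: S(4,5))
  qed
  have hat_scale: "hat (c *\<^sub>R U) = c *\<^sub>R hat U" for c U
    by (simp add: hat_def matrix_scalar_ac scalar_matrix_assoc)
  define Y1 where "Y1 = Q + 2 *\<^sub>R (Q ** Q)"
  define Y where "Y = T ** Y1"
  have symY1: "transpose Y1 = Y1"
    by (simp add: Y1_def transpose_add transpose_scalar matrix_transpose_mul symQ)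
  have comm: "T ** Y1 = Y1 ** T"
    by (simp add: T_def Y1_def matrix_add_ldistrib mm_radd matrix_scalar_ac scalar_matrix_assoc[symmetric] matrix_mul_assoc scaleR_right_distrib)
  have symY: "transpose Y = Y"
    by (simp add: Y_def matrix_transpose_mul symY1 symT comm)
  have TiY: "Ti ** Y = Y1" by (simp add: Y_def matrix_mul_assoc TiT)
  have IQ: "(mat 1 - 2 *\<^sub>R Q) ** T = mat 1 - Y1"
    by (simp add: T_def Y1_def mm_rdiff matrix_add_ldistrib scalar_matrix_assoc[symmetric] algebra_simps times2_scaleR)
  have IQ2: "mat 1 - 2 *\<^sub>R Q = Ti - Y1 ** Ti"
  proof -
    have "mat 1 - 2 *\<^sub>R Q = (mat 1 - 2 *\<^sub>R Q) ** (T ** Ti)" by (simp add: TTi)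
    also have "\<dots> = (mat 1 - Y1) ** Ti" by (simp add: matrix_mul_assoc IQ)
    finally show ?thesis by (simp add: mm_rdiff)
  qed
  have g_eq: "trace D - 2 * (Q \<bullet> D) = trace (Ti ** D) - hat Y \<bullet> hat D"
  proof -
    have "trace D - 2 * (Q \<bullet> D) = trace ((mat 1 - 2 *\<^sub>R Q) ** D)"
      by (simp add: mm_rdiff trace_sub scalar_matrix_assoc[symmetric] trace_scaleR tr_sym_inner[OF symQ])
    also have "\<dots> = trace (Ti ** D) - trace (Y1 ** Ti ** D)"
      by (simp add: IQ2 mm_rdiff trace_sub)
    also have "Y1 ** Ti ** D = Ti ** Y ** (Ti ** D)" by (simp add: TiY matrix_mul_assoc)
    also have "trace \<dots> = hat Y \<bullet> hat D" by (rule beta[OF symY])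
    finally show ?thesis .
  qed
  have nY: "norm (hat Y) = norm Y1"
  proof -
    have "(norm (hat Y))^2 = hat Y \<bullet> hat Y" by (simp add: power2_norm_eq_inner)
    also have "\<dots> = trace (Ti ** Y ** (Ti ** Y))" by (rule beta[OF symY, symmetric])
    also have "\<dots> = trace (Y1 ** Y1)" by (simp add: TiY matrix_mul_assoc[symmetric])
    also have "\<dots> = (norm Y1)^2" by (simp add: tr_sym_inner[OF symY1] power2_norm_eq_inner)
    finally show ?thesis by (simp add: power2_eq_iff_nonneg)
  qed
  have nD: "sqrt (trace (Ti ** D ** (Ti ** D))) = norm (hat D)"
    by (simp add: beta[OF symD] power2_norm_eq_inner[symmetric])
  have cone': "trace (Ti ** D) \<ge> \<alpha> * norm (hat D)"
    using cone by (simp add: Ti_def T_def nD[unfolded Ti_def T_def])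
  have nQQ_le: "norm (Q ** Q) \<le> (norm Q)^2" using norm_mm[of Q Q] by (simp add: power2_eq_square)
  have Y1b: "norm Y1 \<le> norm Q + 2 * norm (Q ** Q)"
    using norm_triangle_ineq[of Q "2 *\<^sub>R (Q ** Q)"] by (simp add: Y1_def)
  have aa: "\<alpha> * \<alpha> \<le> \<alpha>" using al by (simp add: mult_left_le)
  have Y1a: "norm Y1 \<le> \<alpha>" using Y1b nQQ_le nQ aa by (simp add: power2_eq_square)
  have hD0: "norm (hat D) > 0"
  proof -
    have "hat D \<noteq> 0" using D0 hat_inv[of D] by auto
    then show ?thesis by simp
  qed
  have CS: "hat Y \<bullet> hat D \<le> norm (hat Y) * norm (hat D)" by (rule norm_cauchy_schwarz)
  show ?thesis
  proof (cases "trace D - 2 * (Q \<bullet> D) > 0")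
    case True thus ?thesis by simp
  next
    case False
    let ?d = "norm (hat D)"
    have le: "trace (Ti ** D) \<le> hat Y \<bullet> hat D" using False g_eq by simp
    have "\<alpha> * ?d \<le> norm Y1 * ?d" using cone' le CS[unfolded nY] by linarith
    then have aY: "\<alpha> \<le> norm Y1" using hD0 by simp
    have a1: "\<alpha> = 1"
    proof -
      have "\<alpha> \<le> \<alpha>/2 + 2 * (\<alpha>/2)^2" using aY Y1b nQQ_le nQ by simp
      then have "\<alpha> \<le> \<alpha> * \<alpha>" by (simp add: power2_eq_square)
      then have "1 \<le> \<alpha>" using al by simp
      then show ?thesis using al by simp
    qed
    have nQh: "norm Q = 1/2" using nQ a1 by simp
    have nQQ: "norm (Q ** Q) = (norm Q)^2"
      using aY Y1b nQQ_le a1 unfolding nQh by (simp add: power2_eq_square)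
    have QQ: "Q ** Q = trace Q *\<^sub>R Q" by (rule lagrange_mat[OF symQ nQQ])
    define \<tau> where "\<tau> = trace Q"
    have tpos: "\<tau> > 0" using trQ nQ a1 by (simp add: \<tau>_def)
    have nhY: "norm (hat Y) = 1" using aY Y1a nY a1 by simp
    have eqCS: "hat Y \<bullet> hat D = norm (hat Y) * norm (hat D)"
      using CS le cone' a1 nhY by simp
    then have "norm (hat Y) *\<^sub>R hat D = norm (hat D) *\<^sub>R hat Y" by (simp add: norm_cauchy_schwarz_eq)
    then have hDY: "hat D = hat (?d *\<^sub>R Y)" using nhY by (simp add: hat_scale)
    have DY: "D = ?d *\<^sub>R Y"
    proof -
      have "D = Si ** hat D ** Si" by (simp only: hat_inv)
      also have "\<dots> = Si ** hat (?d *\<^sub>R Y) ** Si" by (rule arg_cong[where f="\<lambda>Z. Si ** Z ** Si", OF hDY])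
      also have "\<dots> = ?d *\<^sub>R Y" by (simp only: hat_inv)
      finally show ?thesis .
    qed
    have Y1e: "Y1 = (1 + 2 * \<tau>) *\<^sub>R Q" by (simp add: Y1_def QQ \<tau>_def algebra_simps)
    have TQ: "T ** Q = (1 + \<tau>) *\<^sub>R Q"
      by (simp add: T_def mm_radd QQ \<tau>_def[symmetric] scaleR_left_distrib)
    have Ye: "Y = ((1 + 2 * \<tau>) * (1 + \<tau>)) *\<^sub>R Q"
      by (simp add: Y_def Y1e matrix_scalar_ac scalar_matrix_assoc[symmetric] TQ)
    have Qe: "Q = (1 / \<tau>) *\<^sub>R (Q ** Q)" using tpos by (simp add: QQ \<tau>_def[symmetric])
    define c where "c = ?d * ((1 + 2 * \<tau>) * (1 + \<tau>)) / \<tau>"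
    have "c > 0" using tpos hD0 by (simp add: c_def)
    moreover have "D = c *\<^sub>R (Q ** Q)"
    proof -
      have "D = ?d *\<^sub>R Y" by (rule DY)
      also have "\<dots> = ?d *\<^sub>R (((1 + 2 * \<tau>) * (1 + \<tau>)) *\<^sub>R Q)" by (simp only: Ye)
      also have "\<dots> = (?d * ((1 + 2 * \<tau>) * (1 + \<tau>))) *\<^sub>R ((1 / \<tau>) *\<^sub>R (Q ** Q))"
        by (simp only: Qe[symmetric] scaleR_scaleR)
      also have "\<dots> = c *\<^sub>R (Q ** Q)" by (simp add: c_def)
      finally show ?thesis .
    qed
    ultimately show ?thesis by blast
  qed
qed

lemma PL:
  fixes X W :: "real^'n^'n"
  assumes al: "\<alpha> > 0" and xc: "trace X \<ge> \<alpha> * norm X" and xp: "norm X > 0"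
    and g: "norm X * trace W - \<alpha> * (X \<bullet> W) > 0"
  shows "\<exists>s>0. trace (X + s *\<^sub>R W) \<ge> \<alpha> * norm (X + s *\<^sub>R W)"
proof -
  define x where "x = norm X"
  define a where "a = trace W"
  define b where "b = X \<bullet> W"
  define d2 where "d2 = W \<bullet> W"
  define k where "k = x * a - \<alpha> * b"
  have kp: "k > 0" using g by (simp add: k_def x_def a_def b_def)
  have xp': "x > 0" using xp by (simp add: x_def)
  define m1 where "m1 = \<bar>a^2 - \<alpha>^2 * d2\<bar> + 1"
  define m2 where "m2 = \<bar>a\<bar> + 1"
  have m1p: "m1 > 0" and m2p: "m2 > 0" by (auto simp: m1_def m2_def)
  define s where "s = min (\<alpha> * k / m1) (\<alpha> * x / m2)"
  have sp: "s > 0" using al kp xp' m1p m2p by (simp add: s_def)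
  have s1: "s * \<bar>a^2 - \<alpha>^2 * d2\<bar> \<le> \<alpha> * k"
  proof -
    have "s \<le> \<alpha> * k / m1" by (simp add: s_def)
    then have "s * m1 \<le> \<alpha> * k" using m1p by (simp add: le_divide_eq)
    moreover have "s * \<bar>a^2 - \<alpha>^2 * d2\<bar> \<le> s * m1" using sp by (simp add: m1_def)
    ultimately show ?thesis by linarith
  qed
  have s2: "s * \<bar>a\<bar> \<le> \<alpha> * x"
  proof -
    have "s \<le> \<alpha> * x / m2" by (simp add: s_def)
    then have "s * m2 \<le> \<alpha> * x" using m2p by (simp add: le_divide_eq)
    moreover have "s * \<bar>a\<bar> \<le> s * m2" using sp by (simp add: m2_def)
    ultimately show ?thesis by linarith
  qed
  have tr: "trace (X + s *\<^sub>R W) = trace X + s * a" by (simp add: trace_add trace_scaleR a_def)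
  have nn: "(norm (X + s *\<^sub>R W))^2 = x^2 + 2 * s * b + s^2 * d2"
    unfolding power2_norm_eq_inner x_def b_def d2_def
    by (simp add: inner_add_left inner_add_right inner_commute[of W X] power2_eq_square algebra_simps)
  have "s * (- \<bar>a\<bar>) \<le> s * a" using sp by (intro mult_left_mono) auto
  then have lowa: "s * a \<ge> - (\<alpha> * x)" using s2 by simp
  have pos: "\<alpha> * x + s * a \<ge> 0" using lowa by linarith
  have key: "(\<alpha> * x + s * a)^2 - \<alpha>^2 * (x^2 + 2 * s * b + s^2 * d2) = s * (2 * \<alpha> * k + s * (a^2 - \<alpha>^2 * d2))"
    by (simp add: k_def power2_eq_square algebra_simps)
  have "s * (- \<bar>a^2 - \<alpha>^2 * d2\<bar>) \<le> s * (a^2 - \<alpha>^2 * d2)" using sp by (intro mult_left_mono) auto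
  then have "s * (a^2 - \<alpha>^2 * d2) \<ge> - (\<alpha> * k)" using s1 by simp
  moreover have "\<alpha> * k > 0" using al kp by simp
  ultimately have "2 * \<alpha> * k + s * (a^2 - \<alpha>^2 * d2) \<ge> 0" by linarith
  then have "(\<alpha> * x + s * a)^2 - \<alpha>^2 * (x^2 + 2 * s * b + s^2 * d2) \<ge> 0" unfolding key using sp by simp
  then have "(\<alpha> * norm (X + s *\<^sub>R W))^2 \<le> (\<alpha> * x + s * a)^2" by (simp add: power_mult_distrib nn)
  then have "\<alpha> * norm (X + s *\<^sub>R W) \<le> \<alpha> * x + s * a" using pos by (rule power2_le_imp_le)
  also have "\<dots> \<le> trace (X + s *\<^sub>R W)" using xc by (simp add: tr x_def)
  finally show ?thesis using sp by blast
qed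

lemma Amap_inner: "Amap A Y = (\<chi> i. transpose (A i) \<bullet> Y)"
  by (simp add: Amap_def tr_inner)

lemma cont_Amap: "continuous_on S (Amap A)"
  unfolding Amap_inner[abs_def] by (intro continuous_intros)

lemma cont_trace: "continuous_on S (\<lambda>Y. trace (C ** (Y::real^'n^'n)))"
  unfolding tr_inner by (intro continuous_intros)

lemma Amap_scale: "Amap A (c *\<^sub>R Y) = c *\<^sub>R Amap A Y"
  by (simp add: Amap_inner vec_eq_iff)

lemma Amap_add: "Amap A (Y + Z) = Amap A Y + Amap A Z"
  by (simp add: Amap_inner vec_eq_iff inner_add_right)

lemma Amap_diff: "Amap A (Y - Z) = Amap A Y - Amap A Z"
  by (simp add: Amap_inner vec_eq_iff inner_diff_right)

lemma trace_scale': "trace (C ** (c *\<^sub>R (Y::real^'n^'n))) = c * trace (C ** Y)"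
  by (simp add: tr_inner)

lemma RC:
  fixes C :: "real^'n^'n" and A :: "'m::finite \<Rightarrow> real^'n^'n"
  assumes symC: "sym_mat C" and symA: "\<And>i. sym_mat (A i)"
    and C_not_span: "\<not> (\<exists>y::real^'m. C = (\<Sum>i\<in>UNIV. y $ i *\<^sub>R A i))"
  shows "\<exists>R. transpose R = R \<and> Amap A R = 0 \<and> trace (C ** R) > 0"
proof -
  obtain p z where p: "p \<in> span (range A)" and orth: "\<And>w. w \<in> span (range A) \<Longrightarrow> orthogonal z w"
    and Cpz: "C = p + z"
    by (rule orthogonal_subspace_decomp_exists[of "range A" C]) auto
  define W where "W = {M. \<exists>y::real^'m. M = (\<Sum>i\<in>UNIV. y $ i *\<^sub>R A i)}"
  have subW: "subspace W" unfolding subspace_def W_def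
  proof (intro conjI ballI allI)
    show "0 \<in> {M. \<exists>y::real^'m. M = (\<Sum>i\<in>UNIV. y $ i *\<^sub>R A i)}"
      by (auto intro!: exI[of _ 0])
  next
    fix x y assume "x \<in> {M. \<exists>y::real^'m. M = (\<Sum>i\<in>UNIV. y $ i *\<^sub>R A i)}" "y \<in> {M. \<exists>y::real^'m. M = (\<Sum>i\<in>UNIV. y $ i *\<^sub>R A i)}"
    then obtain u v :: "real^'m" where "x = (\<Sum>i\<in>UNIV. u $ i *\<^sub>R A i)" "y = (\<Sum>i\<in>UNIV. v $ i *\<^sub>R A i)" by auto
    then have "x + y = (\<Sum>i\<in>UNIV. (u + v) $ i *\<^sub>R A i)" by (simp add: sum.distrib scaleR_add_left)
    then show "x + y \<in> {M. \<exists>y::real^'m. M = (\<Sum>i\<in>UNIV. y $ i *\<^sub>R A i)}" by blast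
  next
    fix c x assume "x \<in> {M. \<exists>y::real^'m. M = (\<Sum>i\<in>UNIV. y $ i *\<^sub>R A i)}"
    then obtain u :: "real^'m" where "x = (\<Sum>i\<in>UNIV. u $ i *\<^sub>R A i)" by auto
    then have "c *\<^sub>R x = (\<Sum>i\<in>UNIV. (c *\<^sub>R u) $ i *\<^sub>R A i)" by (simp add: scaleR_sum_right)
    then show "c *\<^sub>R x \<in> {M. \<exists>y::real^'m. M = (\<Sum>i\<in>UNIV. y $ i *\<^sub>R A i)}" by blast
  qed
  have rW: "range A \<subseteq> W"
  proof
    fix M assume "M \<in> range A"
    then obtain j where j: "M = A j" by auto
    have ax: "(\<Sum>i\<in>UNIV. (axis j 1 :: real^'m) $ i *\<^sub>R A i) = A j"
      by (simp add: axis_def if_distrib[of "\<lambda>c. c *\<^sub>R _"] cong: if_cong)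
    show "M \<in> W" unfolding W_def j by (intro CollectI exI[of _ "axis j 1"]) (rule ax[symmetric])
  qed
  have pW: "p \<in> W" using span_minimal[OF rW subW] p by blast
  define Sy where "Sy = {M::real^'n^'n. transpose M = M}"
  have subSy: "subspace Sy" unfolding subspace_def Sy_def
    by (auto simp: transpose_add transpose_scalar transpose_def vec_eq_iff)
  have "range A \<subseteq> Sy" using symA by (auto simp: Sy_def sym_mat_def)
  then have "p \<in> Sy" using span_minimal[OF _ subSy] p by blast
  then have symp: "transpose p = p" by (simp add: Sy_def)
  have symz: "transpose z = z"
  proof -
    have "z = C - p" using Cpz by simp
    then show ?thesis using symp symC by (simp add: transpose_diff sym_mat_def)
  qed
  have z0: "z \<noteq> 0"
  proof
    assume "z = 0"
    then have "C = p" using Cpz by simp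
    then show False using pW C_not_span by (auto simp: W_def)
  qed
  have "Amap A z = 0"
  proof -
    have "A i \<bullet> z = 0" for i
    proof -
      have "A i \<in> span (range A)" by (simp add: span_base)
      then have "orthogonal z (A i)" by (rule orth)
      then show ?thesis by (simp add: orthogonal_def inner_commute)
    qed
    moreover have tA: "transpose (A i) = A i" for i using symA by (simp add: sym_mat_def)
    ultimately show ?thesis by (simp only: Amap_inner tA) (simp add: vec_eq_iff)
  qed
  moreover have "trace (C ** z) > 0"
  proof -
    have "orthogonal z p" by (rule orth[OF p])
    then have "p \<bullet> z = 0" by (simp add: orthogonal_def inner_commute)
    then have "trace (C ** z) = z \<bullet> z" using symC
      by (simp add: tr_sym_inner sym_mat_def Cpz inner_add_left transpose_add symp symz)
    then show ?thesis using z0 by simp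
  qed
  ultimately show ?thesis using symz by blast
qed

lemma EX:
  fixes C :: "real^'n^'n" and A :: "'m::finite \<Rightarrow> real^'n^'n" and b :: "real^'m"
    and K :: "(real^'n^'n) set"
  assumes clK: "closed K" and coneK: "\<And>Y c. Y \<in> K \<Longrightarrow> c > 0 \<Longrightarrow> c *\<^sub>R Y \<in> K"
    and Y0: "Y0 \<in> K" "Amap A Y0 = b"
    and MC: "\<And>D. D \<in> K \<Longrightarrow> Amap A D = 0 \<Longrightarrow> D \<noteq> 0 \<Longrightarrow> trace (C ** D) > 0"
  shows "\<exists>Y. Y \<in> K \<and> Amap A Y = b \<and> (\<forall>Z. Z \<in> K \<and> Amap A Z = b \<longrightarrow> trace (C ** Y) \<le> trace (C ** Z))"
proof -
  define f where "f Y = trace (C ** Y)" for Y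
  have contf: "continuous_on S f" for S unfolding f_def by (rule cont_trace)
  define L where "L = {Y \<in> K. Amap A Y = b \<and> f Y \<le> f Y0}"
  have clL: "closed L"
  proof -
    have "L = K \<inter> {Y. Amap A Y = b} \<inter> {Y. f Y \<le> f Y0}" by (auto simp: L_def)
    moreover have "closed {Y. Amap A Y = b}"
      by (rule closed_Collect_eq) (auto intro: cont_Amap continuous_intros)
    moreover have "closed {Y. f Y \<le> f Y0}"
      by (rule closed_Collect_le) (auto intro: contf continuous_intros)
    ultimately show ?thesis using clK by (simp add: closed_Int)
  qed
  have bdL: "bounded L"
  proof (cases "K \<inter> sphere 0 1 = {}")
    case True
    have "Y = 0" if "Y \<in> K" for Y
    proof (rule ccontr)
      assume "Y \<noteq> 0"
      then have "(1 / norm Y) *\<^sub>R Y \<in> K \<inter> sphere 0 1" using coneK[OF that, of "1/norm Y"] by simp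
      then show False using True by blast
    qed
    then have "L \<subseteq> {0}" by (auto simp: L_def)
    then show ?thesis by (meson bounded_empty bounded_insert bounded_subset)
  next
    case False
    define h where "h D = norm (Amap A D) + max 0 (f D)" for D
    have cT: "compact (K \<inter> sphere 0 1)" using clK by (simp add: closed_Int_compact)
    have ch: "continuous_on (K \<inter> sphere 0 1) h" unfolding h_def
      by (intro continuous_intros cont_Amap contf)
    obtain D0 where D0: "D0 \<in> K \<inter> sphere 0 1" and D0min: "\<And>D. D \<in> K \<inter> sphere 0 1 \<Longrightarrow> h D0 \<le> h D"
      using continuous_attains_inf[OF cT False ch] by blast
    have mup: "h D0 > 0"
    proof (cases "Amap A D0 = 0")
      case True
      have "D0 \<noteq> 0" using D0 by auto
      then have "f D0 > 0" using MC[of D0] D0 True by (simp add: f_def)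
      then show ?thesis by (simp add: h_def add_nonneg_pos)
    next
      case False
      then have "norm (Amap A D0) > 0" by simp
      moreover have "max 0 (f D0) \<ge> 0" by simp
      ultimately show ?thesis unfolding h_def by linarith
    qed
    define B where "B = (norm b + max 0 (f Y0)) / h D0"
    have "norm Y \<le> B" if "Y \<in> L" for Y
    proof (cases "Y = 0")
      case True then show ?thesis using mup by (simp add: B_def)
    next
      case False
      let ?c = "1 / norm Y"
      have cp: "?c > 0" using False by simp
      have YK: "Y \<in> K" and AY: "Amap A Y = b" and fY: "f Y \<le> f Y0" using that by (auto simp: L_def)
      have "?c *\<^sub>R Y \<in> K \<inter> sphere 0 1" using coneK[OF YK cp] False by simp
      then have "h D0 \<le> h (?c *\<^sub>R Y)" by (rule D0min)
      also have "h (?c *\<^sub>R Y) = ?c * (norm b + max 0 (f Y))"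
      proof -
        have "norm (Amap A (?c *\<^sub>R Y)) = ?c * norm b" using cp by (simp add: Amap_scale AY)
        moreover have "f (?c *\<^sub>R Y) = ?c * f Y" by (simp add: f_def trace_scale')
        moreover have "max 0 (?c * f Y) = ?c * max 0 (f Y)" using cp by (simp add: max_mult_distrib_left)
        ultimately show ?thesis by (simp add: h_def distrib_left)
      qed
      also have "\<dots> \<le> ?c * (norm b + max 0 (f Y0))" using cp fY by (intro mult_left_mono) auto
      finally have "h D0 \<le> (norm b + max 0 (f Y0)) / norm Y" by simp
      then have "h D0 * norm Y \<le> norm b + max 0 (f Y0)" using False by (simp add: le_divide_eq)
      then show ?thesis using mup by (simp add: B_def le_divide_eq mult.commute)
    qed
    then show ?thesis by (auto simp: bounded_iff)
  qed
  have cL: "compact L" using clL bdL by (simp add: compact_eq_bounded_closed)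
  have neL: "L \<noteq> {}" using Y0 by (auto simp: L_def)
  obtain Ys where Ys: "Ys \<in> L" and Ymin: "\<And>Z. Z \<in> L \<Longrightarrow> f Ys \<le> f Z"
    using continuous_attains_inf[OF cL neL contf] by blast
  show ?thesis
  proof (intro exI conjI allI impI)
    show "Ys \<in> K" "Amap A Ys = b" using Ys by (auto simp: L_def)
    fix Z assume Z: "Z \<in> K \<and> Amap A Z = b"
    show "trace (C ** Ys) \<le> trace (C ** Z)"
    proof (cases "f Z \<le> f Y0")
      case True
      then have "Z \<in> L" using Z by (simp add: L_def)
      then show ?thesis using Ymin by (simp add: f_def)
    next
      case False
      then show ?thesis using Ys by (simp add: L_def f_def)
    qed
  qed
qed

lemma cont_mm: "continuous_on S (\<lambda>Y::real^'n^'n. M ** Y)"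
  unfolding matrix_matrix_mult_def by (intro continuous_intros)

lemma cont_transpose[continuous_intros]:
  "continuous_on S f \<Longrightarrow> continuous_on S (\<lambda>x. transpose (f x :: real^'n^'m))"
  unfolding transpose_def by (intro continuous_intros)

lemma cont_normE: "continuous_on S (normE E)"
  unfolding normE_def[abs_def] tr_inner by (intro continuous_intros cont_mm)

lemma coneK_closed: "closed (coneK E \<alpha>)"
proof -
  have "coneK E \<alpha> = {Y. transpose Y = Y} \<inter> {Y. \<alpha> * normE E Y \<le> trace (matrix_inv E ** Y)}"
    by (auto simp: coneK_def sym_mat_def)
  moreover have "closed {Y::real^'n^'n. transpose Y = Y}"
    by (rule closed_Collect_eq) (auto simp: transpose_def intro!: continuous_intros)
  moreover have "closed {Y. \<alpha> * normE E Y \<le> trace (matrix_inv E ** Y)}"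
    by (rule closed_Collect_le) (auto intro!: continuous_intros cont_normE cont_trace)
  ultimately show ?thesis using closed_Int by auto
qed

lemma normE_scale: "c > 0 \<Longrightarrow> normE E (c *\<^sub>R Y) = c * normE E Y"
  by (simp add: normE_def matrix_scalar_ac scalar_matrix_assoc[symmetric] trace_scaleR real_sqrt_mult power2_eq_square[symmetric])

lemma coneK_scale: "Y \<in> coneK E \<alpha> \<Longrightarrow> c > 0 \<Longrightarrow> c *\<^sub>R Y \<in> coneK E \<alpha>"
  by (auto simp: coneK_def sym_mat_def transpose_scalar normE_scale matrix_scalar_ac scalar_matrix_assoc[symmetric] trace_scaleR)

lemma trC_add: "trace (C ** (Y + Z)) = trace (C ** Y) + trace (C ** (Z::real^'n^'n))"
  by (simp add: tr_inner inner_add_right)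
lemma trC_diff: "trace (C ** (Y - Z)) = trace (C ** Y) - trace (C ** (Z::real^'n^'n))"
  by (simp add: tr_inner inner_diff_right)

lemma posTr:
  fixes S B :: "real^'n^'n"
  assumes pd: "pos_def S" and B0: "B \<noteq> 0"
  shows "trace (transpose B ** S ** B) > 0"
proof -
  define u where "u j = (\<chi> k. B $ k $ j)" for j
  have eq: "trace (transpose B ** S ** B) = (\<Sum>j\<in>UNIV. u j \<bullet> (S *v u j))"
    apply (simp add: trace_def matrix_matrix_mult_def matrix_vector_mult_def inner_vec_def transpose_def u_def sum_distrib_left sum_distrib_right mult_ac)
    apply (rule sum.cong[OF refl])
    apply (subst sum.swap)
    apply (simp add: mult_ac)
    done
  obtain k j where "B $ k $ j \<noteq> 0" using B0 by (auto simp: vec_eq_iff)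
  then have "u j \<noteq> 0" by (auto simp: u_def vec_eq_iff)
  then have pj: "u j \<bullet> (S *v u j) > 0" using pd by (simp add: pos_def_def)
  have nn: "u i \<bullet> (S *v u i) \<ge> 0" for i
    using pd by (cases "u i = 0") (auto simp: pos_def_def less_imp_le)
  show ?thesis unfolding eq by (rule sum_pos2[of UNIV j]) (use pj nn in auto)
qed

theorem proposition2p4:
  fixes C :: "real^'n^'n" and A :: "'m::finite \<Rightarrow> real^'n^'n" and b :: "real^'m"
    and \<alpha> :: real and E X :: "real^'n^'n" and t :: real
  assumes symC: "sym_mat C"
    and symA: "\<And>i. sym_mat (A i)"
    and primal_strict: "\<exists>X0. pos_def X0 \<and> Amap A X0 = b"
    and dual_strict: "\<exists>(y::real^'m) S. pos_def S \<and> (\<Sum>i\<in>UNIV. y $ i *\<^sub>R A i) + S = C"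
    and b_nz: "b \<noteq> 0"
    and C_not_span: "\<not> (\<exists>y::real^'m. C = (\<Sum>i\<in>UNIV. y $ i *\<^sub>R A i))"
    and A_indep: "\<And>c::'m \<Rightarrow> real. (\<Sum>i\<in>UNIV. c i *\<^sub>R A i) = 0 \<Longrightarrow> (\<forall>i. c i = 0)"
    and alpha: "0 < \<alpha>" "\<alpha> \<le> 1"
    and E_swath: "E \<in> Swath C A b \<alpha>"
    and X_opt: "QP_optimal C A b E \<alpha> X"
    and t_def: "t = (\<alpha> / 2) / normE E X"
  shows "(1 / (1 + t)) *\<^sub>R (E + t *\<^sub>R X) \<in> Swath C A b \<alpha>"
proof -
  have pdE: "pos_def E" and AE: "Amap A E = b" using E_swath by (auto simp: Swath_def)
  have AX: "Amap A X = b" and XK: "X \<in> coneK E \<alpha>"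
    and Xopt: "\<And>Y. QP_feasible A b E \<alpha> Y \<Longrightarrow> trace (C ** X) \<le> trace (C ** Y)"
    using X_opt by (auto simp: QP_optimal_def QP_feasible_def)
  have symE: "transpose E = E" using pdE by (simp add: pos_def_def sym_mat_def)
  have symX: "transpose X = X" using XK by (simp add: coneK_def sym_mat_def)
  obtain Ri R :: "real^'n^'n" where RR: "transpose Ri = Ri" "transpose R = R" "Ri ** Ri = E" "Ri ** R = mat 1" "R ** Ri = mat 1"
    using sqrt_pd[OF pdE] by blast
  have PE: "matrix_inv E = R ** R"
  proof (rule inv_unique)
    have "E ** (R ** R) = Ri ** (Ri ** R) ** R" by (simp add: RR(3)[symmetric] matrix_mul_assoc)
    then show "E ** (R ** R) = mat 1" by (simp add: RR(4,5))
  qed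
  define \<Phi> where "\<Phi> Y = R ** Y ** R" for Y
  have \<Phi>sym: "transpose (\<Phi> Y) = \<Phi> Y" if "transpose Y = Y" for Y
    using that by (simp add: \<Phi>_def matrix_transpose_mul RR(2) matrix_mul_assoc)
  have \<Phi>inv: "Ri ** \<Phi> Y ** Ri = Y" for Y
  proof -
    have "Ri ** \<Phi> Y ** Ri = (Ri ** R) ** Y ** (R ** Ri)" by (simp add: \<Phi>_def matrix_mul_assoc)
    then show ?thesis by (simp add: RR(4,5))
  qed
  have \<Phi>0: "\<Phi> Y \<noteq> 0" if "Y \<noteq> 0" for Y
    using \<Phi>inv[of Y] that by auto
  have \<Phi>add: "\<Phi> (Y + Z) = \<Phi> Y + \<Phi> Z" for Y Z
    by (simp add: \<Phi>_def matrix_add_ldistrib mm_radd)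
  have \<Phi>diff: "\<Phi> (Y - Z) = \<Phi> Y - \<Phi> Z" for Y Z
    by (simp add: \<Phi>_def mm_ldiff mm_rdiff)
  have \<Phi>scale: "\<Phi> (c *\<^sub>R Y) = c *\<^sub>R \<Phi> Y" for c Y
    by (simp add: \<Phi>_def matrix_scalar_ac scalar_matrix_assoc)
  have trP: "trace (matrix_inv E ** Y) = trace (\<Phi> Y)" for Y
  proof -
    have "trace (matrix_inv E ** Y) = trace (R ** (R ** Y))" by (simp add: PE matrix_mul_assoc)
    also have "\<dots> = trace (R ** Y ** R)" by (rule trace_mul_sym)
    finally show ?thesis by (simp add: \<Phi>_def)
  qed
  have nP: "normE E Y = norm (\<Phi> Y)" if sY: "transpose Y = Y" for Y
  proof -
    have "matrix_inv E ** Y ** (matrix_inv E ** Y) = R ** (\<Phi> Y ** (R ** Y))"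
      by (simp add: PE \<Phi>_def matrix_mul_assoc)
    then have "trace (matrix_inv E ** Y ** (matrix_inv E ** Y)) = trace (\<Phi> Y ** (R ** Y) ** R)"
      by (simp add: trace_mul_sym[of R])
    also have "\<Phi> Y ** (R ** Y) ** R = \<Phi> Y ** \<Phi> Y" by (simp add: \<Phi>_def matrix_mul_assoc)
    also have "trace \<dots> = (norm (\<Phi> Y))^2"
      by (simp add: tr_sym_inner[OF \<Phi>sym[OF sY]] power2_norm_eq_inner)
    finally show ?thesis by (simp add: normE_def)
  qed
  have coneE: "Y \<in> coneK E \<alpha> \<longleftrightarrow> trace (\<Phi> Y) \<ge> \<alpha> * norm (\<Phi> Y)" if sY: "transpose Y = Y" for Y
    using sY by (simp add: coneK_def sym_mat_def trP nP)
  define Xt where "Xt = \<Phi> X"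
  have symXt: "transpose Xt = Xt" by (simp add: Xt_def \<Phi>sym[OF symX])
  have X0: "X \<noteq> 0"
  proof
    assume X00: "X = 0"
    have "Amap A X = (\<chi> i. 0)" unfolding Amap_inner X00 by simp
    also have "(\<chi> i. 0) = (0::real^'m)" by (simp add: vec_eq_iff)
    finally have "Amap A X = 0" .
    then show False using AX b_nz by simp
  qed
  define x where "x = norm Xt"
  have xp: "x > 0" using \<Phi>0[OF X0] by (simp add: x_def Xt_def)
  have nXE: "normE E X = x" by (simp add: nP[OF symX] x_def Xt_def)
  have trXt: "trace Xt \<ge> \<alpha> * x" using XK coneE[OF symX] by (simp add: Xt_def x_def)
  have tx: "t = (\<alpha> / 2) / x" using t_def nXE by simp
  have tp: "t > 0" using tx xp alpha by simp
  have t2x: "2 * t * x = \<alpha>" using tx xp by simp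
  define Q where "Q = t *\<^sub>R Xt"
  have symQ: "transpose Q = Q" by (simp add: Q_def transpose_scalar symXt)
  have nQ: "norm Q = \<alpha> / 2" using tp t2x by (simp add: Q_def x_def[symmetric])
  have trQ: "trace Q \<ge> \<alpha> * norm Q"
  proof -
    have "trace Q = t * trace Xt" by (simp add: Q_def trace_scaleR)
    moreover have "t * trace Xt \<ge> t * (\<alpha> * x)" using trXt tp by simp
    moreover have "norm Q = t * x" using tp by (simp add: Q_def x_def)
    ultimately show ?thesis by (simp add: mult_ac)
  qed
  define T where "T = mat 1 + Q"
  have pdT: "pos_def T" unfolding T_def using symQ nQ alpha by (intro pd_I_plus) auto
  define Ti where "Ti = matrix_inv T"
  have TTi: "T ** Ti = mat 1" and TiT: "Ti ** T = mat 1" using pd_inv[OF pdT] by (auto simp: Ti_def)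
  define E' where "E' = (1 / (1 + t)) *\<^sub>R (E + t *\<^sub>R X)"
  have NE: "E + t *\<^sub>R X = Ri ** T ** Ri"
  proof -
    have "Ri ** T ** Ri = Ri ** Ri + t *\<^sub>R (Ri ** Xt ** Ri)"
      by (simp add: T_def Q_def matrix_add_ldistrib mm_radd matrix_scalar_ac scalar_matrix_assoc[symmetric])
    then show ?thesis by (simp add: RR(3) Xt_def \<Phi>inv)
  qed
  have symE': "transpose E' = E'"
    by (simp add: E'_def transpose_scalar transpose_add symE symX)
  have pdE': "pos_def E'"
    unfolding pos_def_def sym_mat_def
  proof (intro conjI allI impI symE')
    fix v :: "real^'n" assume v0: "v \<noteq> 0"
    have "Ri *v v \<noteq> 0"
    proof
      assume "Ri *v v = 0"
      then have "R *v (Ri *v v) = 0" by simp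
      then show False using v0 by (simp add: matrix_vector_mul_assoc RR(5))
    qed
    then have pos: "(Ri *v v) \<bullet> (T *v (Ri *v v)) > 0" using pdT by (simp add: pos_def_def)
    have "E' *v v = (1 / (1 + t)) *\<^sub>R (Ri *v (T *v (Ri *v v)))"
      by (simp add: E'_def NE matrix_vector_mul_assoc scaleR_matrix_vector_assoc matrix_mul_assoc)
    then have "v \<bullet> (E' *v v) = (1 / (1 + t)) * (v \<bullet> (Ri *v (T *v (Ri *v v))))" by simp
    also have "v \<bullet> (Ri *v (T *v (Ri *v v))) = (Ri *v v) \<bullet> (T *v (Ri *v v))"
      by (metis dot_lmul_matrix RR(1) transpose_matrix_vector)
    finally show "0 < v \<bullet> (E' *v v)" using pos tp by simp
  qed
  have AE': "Amap A E' = b"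
  proof -
    have "Amap A E' = (1 / (1 + t)) *\<^sub>R (b + t *\<^sub>R b)" by (simp add: E'_def Amap_scale Amap_add AE AX)
    also have "b + t *\<^sub>R b = (1 + t) *\<^sub>R b" by (simp add: scaleR_left_distrib)
    finally show ?thesis using tp by simp
  qed
  define P' where "P' = (1 + t) *\<^sub>R (R ** Ti ** R)"
  have E'P': "E' ** P' = mat 1"
  proof -
    have "E' ** P' = ((1 / (1 + t)) * (1 + t)) *\<^sub>R ((Ri ** T ** Ri) ** (R ** Ti ** R))"
      by (simp add: E'_def P'_def NE matrix_scalar_ac scalar_matrix_assoc[symmetric])
    also have "(Ri ** T ** Ri) ** (R ** Ti ** R) = Ri ** T ** (Ri ** R) ** Ti ** R"
      by (simp add: matrix_mul_assoc)
    also have "\<dots> = Ri ** R" by (simp add: RR(4) TTi matrix_mul_assoc[symmetric])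
    finally show ?thesis using tp by (simp add: RR(4))
  qed
  have PE': "matrix_inv E' = P'" by (rule inv_unique[OF E'P'])
  have trP': "trace (matrix_inv E' ** D) = (1 + t) * trace (Ti ** \<Phi> D)" for D
  proof -
    have "matrix_inv E' ** D = (1 + t) *\<^sub>R (R ** (Ti ** R ** D))"
      by (simp add: PE' P'_def scalar_matrix_assoc[symmetric] matrix_mul_assoc)
    then have "trace (matrix_inv E' ** D) = (1 + t) * trace (R ** (Ti ** R ** D))" by (simp add: trace_scaleR)
    also have "trace (R ** (Ti ** R ** D)) = trace (Ti ** R ** D ** R)" by (rule trace_mul_sym)
    finally show ?thesis by (simp add: \<Phi>_def matrix_mul_assoc)
  qed
  have nP': "normE E' D = (1 + t) * sqrt (trace (Ti ** \<Phi> D ** (Ti ** \<Phi> D)))" for D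
  proof -
    have "matrix_inv E' ** D ** (matrix_inv E' ** D) = ((1 + t) * (1 + t)) *\<^sub>R (R ** (Ti ** R ** D ** R ** Ti ** R ** D))"
      by (simp add: PE' P'_def scalar_matrix_assoc[symmetric] matrix_scalar_ac matrix_mul_assoc)
    then have "trace (matrix_inv E' ** D ** (matrix_inv E' ** D)) = ((1 + t) * (1 + t)) * trace (R ** (Ti ** R ** D ** R ** Ti ** R ** D))"
      by (simp add: trace_scaleR)
    also have "trace (R ** (Ti ** R ** D ** R ** Ti ** R ** D)) = trace (Ti ** R ** D ** R ** Ti ** R ** D ** R)"
      by (rule trace_mul_sym)
    also have "Ti ** R ** D ** R ** Ti ** R ** D ** R = Ti ** \<Phi> D ** (Ti ** \<Phi> D)"
      by (simp add: \<Phi>_def matrix_mul_assoc)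
    finally show ?thesis using tp by (simp add: normE_def real_sqrt_mult)
  qed
  have coneE': "D \<in> coneK E' \<alpha> \<longleftrightarrow> trace (Ti ** \<Phi> D) \<ge> \<alpha> * sqrt (trace (Ti ** \<Phi> D ** (Ti ** \<Phi> D)))"
    if sD: "transpose D = D" for D
  proof -
    have "D \<in> coneK E' \<alpha> \<longleftrightarrow> (1 + t) * trace (Ti ** \<Phi> D) \<ge> (1 + t) * (\<alpha> * sqrt (trace (Ti ** \<Phi> D ** (Ti ** \<Phi> D))))"
      using sD by (simp add: coneK_def sym_mat_def trP' nP' mult_ac)
    also have "\<dots> \<longleftrightarrow> trace (Ti ** \<Phi> D) \<ge> \<alpha> * sqrt (trace (Ti ** \<Phi> D ** (Ti ** \<Phi> D)))"
      using tp by (simp add: mult_le_cancel_left_pos)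
    finally show ?thesis .
  qed
  obtain Rc where Rc: "transpose Rc = Rc" "Amap A Rc = 0" "trace (C ** Rc) > 0"
    using RC[OF symC symA C_not_span] by blast
  have MC: "trace (C ** D) > 0" if DK: "D \<in> coneK E' \<alpha>" and AD: "Amap A D = 0" and D0: "D \<noteq> 0" for D
  proof -
    have symD: "transpose D = D" using DK by (simp add: coneK_def sym_mat_def)
    define Dt where "Dt = \<Phi> D"
    have symDt: "transpose Dt = Dt" by (simp add: Dt_def \<Phi>sym[OF symD])
    have Dt0: "Dt \<noteq> 0" using \<Phi>0[OF D0] by (simp add: Dt_def)
    have coneDt: "trace (matrix_inv (mat 1 + Q) ** Dt) \<ge> \<alpha> * sqrt (trace (matrix_inv (mat 1 + Q) ** Dt ** (matrix_inv (mat 1 + Q) ** Dt)))"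
      using DK coneE'[OF symD] by (simp add: Dt_def Ti_def T_def)
    from KL[OF symQ nQ trQ alpha symDt Dt0 coneDt]
    show ?thesis
    proof
      assume gD: "trace Dt - 2 * (Q \<bullet> Dt) > 0"
      define gl where "gl W = trace (\<Phi> W) - 2 * (Q \<bullet> \<Phi> W)" for W
      have glD: "gl D > 0" using gD by (simp add: gl_def Dt_def)
      define \<epsilon> where "\<epsilon> = gl D / (2 * (\<bar>gl Rc\<bar> + 1))"
      have ep: "\<epsilon> > 0" using glD by (simp add: \<epsilon>_def add_pos_nonneg)
      define W where "W = D - \<epsilon> *\<^sub>R Rc"
      have glW_eq: "gl W = gl D - \<epsilon> * gl Rc"
        by (simp add: gl_def W_def \<Phi>diff \<Phi>scale trace_sub trace_scaleR inner_diff_right algebra_simps)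
      have "\<epsilon> * \<bar>gl Rc\<bar> \<le> gl D / 2"
      proof -
        have "\<epsilon> * \<bar>gl Rc\<bar> = (gl D / 2) * (\<bar>gl Rc\<bar> / (\<bar>gl Rc\<bar> + 1))" by (simp add: \<epsilon>_def field_simps)
        also have "\<dots> \<le> (gl D / 2) * 1" using glD by (intro mult_left_mono) (auto simp: divide_le_eq)
        finally show ?thesis by simp
      qed
      moreover have "\<epsilon> * gl Rc \<le> \<epsilon> * \<bar>gl Rc\<bar>" using ep by (intro mult_left_mono) auto
      ultimately have glW: "gl W > 0" using glW_eq glD by linarith
      have symW: "transpose W = W" by (simp add: W_def transpose_diff transpose_scalar symD Rc(1))
      have AW: "Amap A W = 0" by (simp add: W_def Amap_diff Amap_scale AD Rc(2))
      define Wt where "Wt = \<Phi> W"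
      have "x * gl W = x * trace Wt - \<alpha> * (Xt \<bullet> Wt)"
      proof -
        have "x * gl W = x * trace Wt - (2 * t * x) * (Xt \<bullet> Wt)"
          by (simp add: gl_def Wt_def Q_def algebra_simps)
        then show ?thesis by (simp add: t2x)
      qed
      moreover have "x * gl W > 0" using glW xp by simp
      ultimately have "x * trace Wt - \<alpha> * (Xt \<bullet> Wt) > 0" by linarith
      then have gPL: "norm Xt * trace Wt - \<alpha> * (Xt \<bullet> Wt) > 0" by (simp add: x_def)
      obtain s where sp: "s > 0" and scone: "trace (Xt + s *\<^sub>R Wt) \<ge> \<alpha> * norm (Xt + s *\<^sub>R Wt)"
        using PL[OF alpha(1) trXt[unfolded x_def] xp[unfolded x_def] gPL] by blast
      define Z where "Z = X + s *\<^sub>R W"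
      have symZ: "transpose Z = Z" by (simp add: Z_def transpose_add transpose_scalar symX symW)
      have "\<Phi> Z = Xt + s *\<^sub>R Wt" by (simp add: Z_def \<Phi>add \<Phi>scale Xt_def Wt_def)
      then have ZK: "Z \<in> coneK E \<alpha>" using coneE[OF symZ] scone by simp
      have AZ: "Amap A Z = b" by (simp add: Z_def Amap_add Amap_scale AX AW)
      have "trace (C ** X) \<le> trace (C ** Z)" using Xopt[of Z] ZK AZ by (simp add: QP_feasible_def)
      also have "trace (C ** Z) = trace (C ** X) + s * trace (C ** W)"
        by (simp add: Z_def trC_add trace_scale')
      finally have "s * trace (C ** W) \<ge> 0" by simp
      then have "trace (C ** W) \<ge> 0" using sp by (simp add: zero_le_mult_iff)
      moreover have "trace (C ** W) = trace (C ** D) - \<epsilon> * trace (C ** Rc)"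
        by (simp add: W_def trC_diff trace_scale')
      moreover have "\<epsilon> * trace (C ** Rc) > 0" using ep Rc(3) by simp
      ultimately show ?thesis by linarith
    next
      assume "\<exists>c>0. Dt = c *\<^sub>R (Q ** Q)"
      then obtain c where cp: "c > 0" and Dtc: "Dt = c *\<^sub>R (Q ** Q)" by blast
      define B where "B = Ri ** Q"
      have trB: "transpose B = Q ** Ri" by (simp add: B_def matrix_transpose_mul symQ RR(1))
      have "D = Ri ** Dt ** Ri" by (simp add: Dt_def \<Phi>inv)
      also have "\<dots> = c *\<^sub>R (B ** transpose B)"
        unfolding trB by (simp add: Dtc B_def matrix_scalar_ac scalar_matrix_assoc[symmetric] matrix_mul_assoc)
      finally have DB: "D = c *\<^sub>R (B ** transpose B)" .
      have B0: "B \<noteq> 0"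
      proof
        assume "B = 0"
        then have "R ** B = 0" by simp
        then have "Q = 0" by (simp add: B_def matrix_mul_assoc RR(5))
        then show False using nQ alpha by simp
      qed
      obtain y :: "real^'m" and S0 where S0: "pos_def S0" and CS: "(\<Sum>i\<in>UNIV. y $ i *\<^sub>R A i) + S0 = C"
        using dual_strict by blast
      have symS0: "transpose S0 = S0" using S0 by (simp add: pos_def_def sym_mat_def)
      have AiD: "A i \<bullet> D = 0" for i
      proof -
        have "A i \<bullet> D = trace (A i ** D)" using symA[of i] by (simp add: tr_sym_inner sym_mat_def)
        also have "\<dots> = Amap A D $ i" by (simp add: Amap_def)
        finally show ?thesis using AD by simp
      qed
      have "trace (C ** D) = C \<bullet> D" using symC by (simp add: tr_sym_inner sym_mat_def)
      also have "\<dots> = (\<Sum>i\<in>UNIV. y $ i * (A i \<bullet> D)) + S0 \<bullet> D"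
        by (simp add: CS[symmetric] inner_add_left inner_sum_left)
      also have "\<dots> = S0 \<bullet> D" by (simp add: AiD)
      also have "\<dots> = trace (S0 ** D)" by (simp add: tr_sym_inner[OF symS0])
      also have "\<dots> = c * trace (S0 ** B ** transpose B)"
        by (simp add: DB matrix_scalar_ac scalar_matrix_assoc[symmetric] trace_scaleR matrix_mul_assoc)
      also have "trace (S0 ** B ** transpose B) = trace (transpose B ** S0 ** B)"
        by (simp add: trace_mul_sym[of "S0 ** B"] matrix_mul_assoc)
      finally show ?thesis using posTr[OF S0 B0] cp by simp
    qed
  qed
  have E'K: "E' \<in> coneK E' \<alpha>"
  proof -
    have P'E': "matrix_inv E' ** E' = mat 1" using E'P' PE' by (simp add: matrix_left_right_inverse)
    have tr1: "trace (matrix_inv E' ** E') = real CARD('n)" by (simp add: P'E' trace_I)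
    have n1: "normE E' E' = sqrt (real CARD('n))" by (simp add: normE_def P'E' trace_I)
    have "sqrt (real CARD('n)) \<le> real CARD('n)"
    proof -
      have ge1: "real CARD('n) \<ge> 1" by simp
      then have "sqrt (real CARD('n)) * 1 \<le> sqrt (real CARD('n)) * sqrt (real CARD('n))"
        by (intro mult_left_mono) auto
      then show ?thesis using ge1 by simp
    qed
    moreover have "\<alpha> * sqrt (real CARD('n)) \<le> sqrt (real CARD('n))"
      using alpha by (intro mult_left_le_one_le) auto
    ultimately have "\<alpha> * sqrt (real CARD('n)) \<le> real CARD('n)" by linarith
    then show ?thesis using symE' by (simp add: coneK_def sym_mat_def tr1 n1)
  qed
  obtain Y where Y: "Y \<in> coneK E' \<alpha>" "Amap A Y = b"
    "\<forall>Z. Z \<in> coneK E' \<alpha> \<and> Amap A Z = b \<longrightarrow> trace (C ** Y) \<le> trace (C ** Z)"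
    using EX[OF coneK_closed coneK_scale E'K AE' MC] by blast
  have "QP_optimal C A b E' \<alpha> Y" using Y by (auto simp: QP_optimal_def QP_feasible_def)
  then have "E' \<in> Swath C A b \<alpha>" using pdE' AE' by (auto simp: Swath_def)
  then show ?thesis by (simp add: E'_def)
qed

end
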